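(* As formal power series in $q$ with coefficients Laurent polynomials in $z$, \[ (1-z)(1-z^{-1})\,\overline{S2}(z,q)=\sum_{n=0}^\infty\sum_{m=-\infty}^\infty\bigl(N2(m,n)-M2(m,n)\bigr)z^mq^n . \]
   Context: Notation: $(a;q)_\infty=\prod_{k\ge0}(1-aq^k)$, $(a;q)_n=(a;q)_\infty/(aq^n;q)_\infty$. Define \[ \overline{S2}(z,q)=\sum_{n=1}^\infty\frac{q^{2n}(q^{2n+2};q^2)_\infty(-q^{2n+1};q^2)_\infty}{(zq^{2n};q^2)_\infty(z^{-1}q^{2n};q^2)_\infty}. \] The numbers $N2(m,n)$ (number of partitions of $n$ without repeated odd parts having $M_2$-rank $m$, where the $M_2$-rank of $\pi$ is $\lceil \ell(\pi)/2\rceil-\#(\pi)$ with $\ell(\pi)$ the largest part and $\#(\pi)$ the number of parts) are given by \[ \sum_{n\ge0}\sum_mN2(m,n)z^mq^n=\sum_{n=0}^\infty\frac{q^{n^2}(-q;q^2)_n}{(zq^2;q^2)_n(z^{-1}q^2;q^2)_n}, \] and the numbers $M2(m,n)$ are defined by \[ \sum_{n\ge0}\sum_mM2(m,n)z^mq^n=\frac{(-q;q^2)_\infty(q^2;q^2)_\infty}{(zq^2;q^2)_\infty(z^{-1}q^2;q^2)_\infty}. \] *)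

theory Defs
  imports "HOL-Computational_Algebra.Formal_Laurent_Series" "HOL-Library.Multiset"
begin

text \<open>Ambient ring: formal power series in q whose coefficients are formal Laurent
  series in z (over the rationals).  Limits are taken in the q-adic
  topology of the fps type.\<close>

type_synonym ser = "rat fls fps"

definition zz :: ser where "zz = fps_const fls_X"
definition zinv :: ser where "zinv = fps_const fls_X_inv"
definition qq :: ser where "qq = fps_X"

definition qpoch :: "ser \<Rightarrow> ser \<Rightarrow> nat \<Rightarrow> ser" where
  "qpoch a b n = (\<Prod>k<n. 1 - a * b ^ k)"

definition qpoch_inf :: "ser \<Rightarrow> ser \<Rightarrow> ser" where
  "qpoch_inf a b = lim (\<lambda>N. qpoch a b N)"

definition S2bar :: ser where
  "S2bar = (\<Sum>n. (let k = Suc n in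
      qq ^ (2*k) * qpoch_inf (qq ^ (2*k+2)) (qq^2) * qpoch_inf (- (qq ^ (2*k+1))) (qq^2)
      / (qpoch_inf (zz * qq ^ (2*k)) (qq^2) * qpoch_inf (zinv * qq ^ (2*k)) (qq^2))))"

definition is_partition :: "nat multiset \<Rightarrow> nat \<Rightarrow> bool" where
  "is_partition p n \<longleftrightarrow> (\<forall>x\<in>#p. 0 < x) \<and> sum_mset p = n"

definition no_rep_odd :: "nat multiset \<Rightarrow> bool" where
  "no_rep_odd p \<longleftrightarrow> (\<forall>x. odd x \<longrightarrow> count p x \<le> 1)"

definition largest_part :: "nat multiset \<Rightarrow> nat" where
  "largest_part p = (if p = {#} then 0 else Max (set_mset p))"

definition M2rank :: "nat multiset \<Rightarrow> int" where
  "M2rank p = \<lceil>real (largest_part p) / 2\<rceil> - int (size p)"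

definition N2 :: "int \<Rightarrow> nat \<Rightarrow> nat" where
  "N2 m n = card {p. is_partition p n \<and> no_rep_odd p \<and> M2rank p = m}"

definition M2gf :: ser where
  "M2gf = qpoch_inf (- qq) (qq^2) * qpoch_inf (qq^2) (qq^2)
          / (qpoch_inf (zz * qq^2) (qq^2) * qpoch_inf (zinv * qq^2) (qq^2))"

definition M2 :: "int \<Rightarrow> nat \<Rightarrow> rat" where
  "M2 m n = fls_nth (fps_nth M2gf n) m"

end

theory Submission
  imports Defs
begin


definition agree :: "nat \<Rightarrow> ser \<Rightarrow> ser \<Rightarrow> bool" where
  "agree n f g \<longleftrightarrow> (\<forall>i<n. f $ i = g $ i)"

abbreviation ordge :: "nat \<Rightarrow> ser \<Rightarrow> bool" where
  "ordge n f \<equiv> agree n f 0"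

lemma agree_refl[simp]: "agree n f f" by (simp add: agree_def)
lemma agree_sym: "agree n f g \<Longrightarrow> agree n g f" by (simp add: agree_def)
lemma agree_trans: "agree n f g \<Longrightarrow> agree n g h \<Longrightarrow> agree n f h" by (simp add: agree_def)
lemma agree_mono: "agree n f g \<Longrightarrow> m \<le> n \<Longrightarrow> agree m f g" by (simp add: agree_def)
lemma agree_0[simp]: "agree 0 f g" by (simp add: agree_def)
lemma agree_chain: "agree n a b \<Longrightarrow> agree n c d \<Longrightarrow> b = d \<Longrightarrow> agree n a c"
  by (simp add: agree_def)

lemma agree_add: "agree n f g \<Longrightarrow> agree n f' g' \<Longrightarrow> agree n (f+f') (g+g')"
  by (simp add: agree_def)
lemma agree_diff: "agree n f g \<Longrightarrow> agree n f' g' \<Longrightarrow> agree n (f-f') (g-g')"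
  by (simp add: agree_def)
lemma agree_uminus: "agree n f g \<Longrightarrow> agree n (-f) (-g)"
  by (simp add: agree_def)
lemma agree_iff_diff: "agree n f g \<longleftrightarrow> ordge n (f - g)"
  by (simp add: agree_def)

lemma agree_mult: "agree n f g \<Longrightarrow> agree n f' g' \<Longrightarrow> agree n (f*f') (g*g')"
  unfolding agree_def fps_mult_nth by (auto intro!: sum.cong)

lemma agree_mult_left: "agree n f g \<Longrightarrow> agree n (h*f) (h*g)"
  by (rule agree_mult) auto
lemma agree_mult_right: "agree n f g \<Longrightarrow> agree n (f*h) (g*h)"
  by (rule agree_mult) auto

lemma ordge_mult_left: "ordge n f \<Longrightarrow> ordge n (h*f)"
  using agree_mult_left[of n f 0 h] by simp
lemma ordge_mult_right: "ordge n f \<Longrightarrow> ordge n (f*h)"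
  using agree_mult_right[of n f 0 h] by simp

lemma agree_power: "agree n f g \<Longrightarrow> agree n (f^k) (g^k)"
  by (induction k) (auto intro: agree_mult)

lemma agree_sum: "(\<And>x. x \<in> A \<Longrightarrow> agree n (f x) (g x)) \<Longrightarrow> agree n (sum f A) (sum g A)"
  unfolding agree_def by (simp add: fps_sum_nth)

lemma agree_prod: "(\<And>x. x \<in> A \<Longrightarrow> agree n (f x) (g x)) \<Longrightarrow> agree n (prod f A) (prod g A)"
proof (induction A rule: infinite_finite_induct)
  case (insert x F)
  then show ?case by (auto intro: agree_mult)
qed auto

lemma agree_eqI: "(\<And>n. agree n f g) \<Longrightarrow> f = g"
  unfolding agree_def by (intro fps_ext) blast

lemma ordge_mult: "ordge a f \<Longrightarrow> ordge b g \<Longrightarrow> ordge (a+b) (f*g)"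
  unfolding agree_def fps_mult_nth
proof (intro allI impI)
  fix i assume f: "\<forall>i<a. f $ i = 0 $ i" and g: "\<forall>i<b. g $ i = 0 $ i" and i: "i < a+b"
  have "(\<Sum>j = 0..i. f $ j * g $ (i - j)) = 0"
  proof (intro sum.neutral ballI)
    fix j assume j: "j \<in> {0..i}"
    show "f $ j * g $ (i - j) = 0"
    proof (cases "j < a")
      case True then show ?thesis using f by simp
    next
      case False then have "i - j < b" using i j by auto
      then show ?thesis using g by simp
    qed
  qed
  then show "(\<Sum>j = 0..i. f $ j * g $ (i - j)) = 0 $ i" by simp
qed

lemma ordge_power: "ordge a f \<Longrightarrow> ordge (a*k) (f^k)"
proof (induction k)
  case 0 then show ?case by simp
next
  case (Suc k)
  then have "ordge (a + a*k) (f * f^k)" by (intro ordge_mult) auto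
  then show ?case by (simp add: algebra_simps)
qed

lemma ordge_qq_power: "ordge k (qq^k)"
  by (simp add: agree_def qq_def)

lemma ordge_X0: "f $ 0 = 0 \<Longrightarrow> ordge 1 f"
  by (simp add: agree_def)

lemma agree_inverse:
  assumes f0: "f $ 0 \<noteq> 0" and a: "agree n f g"
  shows "agree n (inverse f) (inverse g)"
proof (cases "n = 0")
  case False
  then have g0: "g $ 0 = f $ 0" using a by (simp add: agree_def)
  have fi: "inverse f * f = 1" using f0 by (rule inverse_mult_eq_1)
  have gi: "inverse g * g = 1" using f0 g0 inverse_mult_eq_1[of g] by simp
  have eq: "inverse f - inverse g = inverse f * inverse g * (g - f)"
  proof -
    have "inverse f * inverse g * (g - f) = inverse f * (inverse g * g) - inverse g * (inverse f * f)"
      by (simp add: right_diff_distrib mult_ac)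
    then show ?thesis using fi gi by simp
  qed
  have "ordge n (g - f)" using a by (simp add: agree_def)
  then have "ordge n (inverse f * inverse g * (g - f))" by (rule ordge_mult_left)
  then have "ordge n (inverse f - inverse g)" by (simp only: eq)
  then show ?thesis by (simp add: agree_def)
qed simp

lemma agree_divide:
  assumes g0: "g $ 0 \<noteq> 0" and a: "agree n f f'" and b: "agree n g g'"
  shows "agree n (f / g) (f' / g')"
proof (cases "n = 0")
  case False
  then have "g' $ 0 = g $ 0" using b by (simp add: agree_def)
  then have "g' $ 0 \<noteq> 0" using g0 by simp
  then have "f' / g' = f' * inverse g'" by (rule fps_divide_unit)
  moreover have "f / g = f * inverse g" using g0 by (rule fps_divide_unit)
  ultimately show ?thesis using agree_mult[OF a agree_inverse[OF g0 b]] by simp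
qed simp

text \<open>Infinite sums of series with increasing order\<close>

definition isum :: "(nat \<Rightarrow> ser) \<Rightarrow> ser" where
  "isum f = Abs_fps (\<lambda>i. (\<Sum>k<Suc i. f k) $ i)"

lemma isum_nth_eq:
  assumes "\<And>k. ordge k (f k)" and "i < N"
  shows "isum f $ i = (\<Sum>k<N. f k) $ i"
proof -
  have N: "{..<N} = {..<Suc i} \<union> {Suc i..<N}" using assms(2) by auto
  have "(\<Sum>k<N. f k) = (\<Sum>k<Suc i. f k) + (\<Sum>k\<in>{Suc i..<N}. f k)"
    unfolding N by (subst sum.union_disjoint) auto
  moreover have "(\<Sum>k\<in>{Suc i..<N}. f k) $ i = 0"
    using assms(1) by (auto simp: fps_sum_nth agree_def intro!: sum.neutral)
  ultimately show ?thesis by (simp add: isum_def)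
qed

lemma isum_agree:
  assumes "\<And>k. ordge k (f k)" and "n \<le> N"
  shows "agree n (isum f) (\<Sum>k<N. f k)"
proof (unfold agree_def, intro allI impI)
  fix i assume "i < n"
  then have "i < N" using assms(2) by simp
  then show "isum f $ i = (\<Sum>k<N. f k) $ i" by (rule isum_nth_eq[OF assms(1)])
qed

lemma sums_isum:
  assumes "\<And>k. ordge k (f k)"
  shows "f sums isum f"
  unfolding sums_def
proof (rule tendsto_fpsI)
  fix i
  show "\<forall>\<^sub>F N in sequentially. (\<Sum>k<N. f k) $ i = isum f $ i"
    using eventually_ge_at_top[of "Suc i"]
    by eventually_elim (auto intro: isum_nth_eq[OF assms, symmetric])
qed

lemma suminf_isum:
  assumes "\<And>k. ordge k (f k)"
  shows "suminf f = isum f"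
  using sums_isum[OF assms] by (rule sums_unique[symmetric])

lemma isum_cong: "(\<And>k. f k = g k) \<Longrightarrow> isum f = isum g"
proof -
  assume "\<And>k. f k = g k"
  then have "f = g" by (rule ext)
  then show ?thesis by simp
qed

lemma ordge_isum:
  assumes "\<And>k. ordge k (f k)" "\<And>k. ordge n (f k)"
  shows "ordge n (isum f)"
proof -
  have "agree n (isum f) (\<Sum>k<n. f k)" by (rule isum_agree[OF assms(1)]) auto
  moreover have "ordge n (\<Sum>k<n. f k)"
    using agree_sum[of "{..<n}" n f "\<lambda>_. 0"] assms(2) by simp
  ultimately show ?thesis by (rule agree_trans)
qed

lemma isum_mult_left:
  assumes "\<And>k. ordge k (f k)"
  shows "c * isum f = isum (\<lambda>k. c * f k)"
proof (rule agree_eqI)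
  fix n
  have f2: "\<And>k. ordge k (c * f k)" using assms by (rule ordge_mult_left)
  have "agree n (c * isum f) (c * (\<Sum>k<n. f k))"
    by (intro agree_mult_left isum_agree assms) auto
  moreover have "agree n (isum (\<lambda>k. c * f k)) (\<Sum>k<n. c * f k)"
    by (intro isum_agree f2) auto
  ultimately show "agree n (c * isum f) (isum (\<lambda>k. c * f k))"
    by (simp add: sum_distrib_left agree_def)
qed

lemma isum_add:
  assumes "\<And>k. ordge k (f k)" "\<And>k. ordge k (g k)"
  shows "isum f + isum g = isum (\<lambda>k. f k + g k)"
proof (rule agree_eqI)
  fix n
  have fg: "\<And>k. ordge k (f k + g k)" using agree_add[OF assms(1) assms(2)] by simp
  have "agree n (isum f + isum g) ((\<Sum>k<n. f k) + (\<Sum>k<n. g k))"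
    by (intro agree_add isum_agree assms) auto
  moreover have "agree n (isum (\<lambda>k. f k + g k)) (\<Sum>k<n. f k + g k)"
    by (intro isum_agree fg) auto
  ultimately show "agree n (isum f + isum g) (isum (\<lambda>k. f k + g k))"
    by (simp add: sum.distrib agree_def)
qed

lemma isum_diff:
  assumes "\<And>k. ordge k (f k)" "\<And>k. ordge k (g k)"
  shows "isum f - isum g = isum (\<lambda>k. f k - g k)"
proof (rule agree_eqI)
  fix n
  have fg: "\<And>k. ordge k (f k - g k)" using agree_diff[OF assms(1) assms(2)] by simp
  have "agree n (isum f - isum g) ((\<Sum>k<n. f k) - (\<Sum>k<n. g k))"
    by (intro agree_diff isum_agree assms) auto
  moreover have "agree n (isum (\<lambda>k. f k - g k)) (\<Sum>k<n. f k - g k)"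
    by (intro isum_agree fg) auto
  ultimately show "agree n (isum f - isum g) (isum (\<lambda>k. f k - g k))"
    by (simp add: sum_subtractf agree_def)
qed

lemma isum_shift:
  assumes "\<And>k. ordge k (f k)"
  shows "isum f = f 0 + isum (\<lambda>k. f (Suc k))"
proof (rule agree_eqI)
  fix n
  have f2: "ordge k (f (Suc k))" for k using assms[of "Suc k"] by (simp add: agree_def)
  have "agree n (isum f) (\<Sum>k<Suc n. f k)" by (intro isum_agree assms) auto
  moreover have "agree n (f 0 + isum (\<lambda>k. f (Suc k))) (f 0 + (\<Sum>k<n. f (Suc k)))"
    by (intro agree_add isum_agree f2) auto
  moreover have "(\<Sum>k<Suc n. f k) = f 0 + (\<Sum>k<n. f (Suc k))"
    by (rule sum.lessThan_Suc_shift)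
  ultimately show "agree n (isum f) (f 0 + isum (\<lambda>k. f (Suc k)))"
    by (rule agree_chain)
qed

lemma isum_swap:
  assumes "\<And>n m. ordge (n+m) (T n m)"
  shows "isum (\<lambda>n. isum (\<lambda>m. T n m)) = isum (\<lambda>m. isum (\<lambda>n. T n m))"
proof -
  have A: "\<And>n m. ordge m (T n m)" "\<And>n m. ordge n (T n m)"
    using assms unfolding agree_def by simp_all
  have B: "\<And>n. ordge n (isum (\<lambda>m. T n m))" "\<And>m. ordge m (isum (\<lambda>n. T n m))"
    by (rule ordge_isum; use A in auto)+
  show ?thesis
  proof (rule agree_eqI)
    fix K
    have "agree K (isum (\<lambda>n. isum (\<lambda>m. T n m))) (\<Sum>n<K. isum (\<lambda>m. T n m))"
      by (intro isum_agree B) auto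
    moreover have "agree K (\<Sum>n<K. isum (\<lambda>m. T n m)) (\<Sum>n<K. \<Sum>m<K. T n m)"
      by (intro agree_sum isum_agree A) auto
    moreover have "agree K (isum (\<lambda>m. isum (\<lambda>n. T n m))) (\<Sum>m<K. isum (\<lambda>n. T n m))"
      by (intro isum_agree B) auto
    moreover have "agree K (\<Sum>m<K. isum (\<lambda>n. T n m)) (\<Sum>m<K. \<Sum>n<K. T n m)"
      by (intro agree_sum isum_agree A) auto
    moreover have "(\<Sum>n<K. \<Sum>m<K. T n m) = (\<Sum>m<K. \<Sum>n<K. T n m)"
      by (rule sum.swap)
    ultimately show "agree K (isum (\<lambda>n. isum (\<lambda>m. T n m))) (isum (\<lambda>m. isum (\<lambda>n. T n m)))"
      unfolding agree_def by simp
  qed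
qed


abbreviation Pf :: "ser \<Rightarrow> nat \<Rightarrow> ser" where "Pf a n \<equiv> qpoch a (qq^2) n"
abbreviation Pi :: "ser \<Rightarrow> ser" where "Pi a \<equiv> qpoch_inf a (qq^2)"

abbreviation phi :: "ser \<Rightarrow> rat fls fls" where "phi \<equiv> fps_to_fls"

lemma phi_mult[simp]: "phi (f * g) = phi f * phi g"
  by (rule fls_times_fps_to_fls)

lemma phi_div: "g $ 0 \<noteq> 0 \<Longrightarrow> phi (f / g) = phi f / phi g"
  by (rule fls_divide_fps_to_fls[symmetric]) (simp add: subdegree_eq_0_iff)

lemma phi_nz: "g $ 0 \<noteq> 0 \<Longrightarrow> phi g \<noteq> 0"
  by auto

lemma phi_power[simp]: "phi (f ^ n) = phi f ^ n"
  by (rule fps_to_fls_power)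

lemma phi_one[simp]: "phi 1 = 1" by simp

lemma qpoch_Suc: "qpoch a b (Suc n) = qpoch a b n * (1 - a * b ^ n)"
  by (simp add: qpoch_def)

lemma qpoch_0[simp]: "qpoch a b 0 = 1"
  by (simp add: qpoch_def)

lemma qpoch_add: "qpoch a b (n + m) = qpoch a b n * qpoch (a * b ^ n) b m"
proof (induction m)
  case 0 then show ?case by simp
next
  case (Suc m)
  then show ?case by (simp add: qpoch_Suc power_add mult_ac)
qed

lemma qpoch_nth0: "qpoch a (qq^2) n $ 0 = (if n = 0 then 1 else 1 - a $ 0)"
proof (induction n)
  case 0 then show ?case by simp
next
  case (Suc n)
  have "(a * (qq^2)^n) $ 0 = (if n = 0 then a $ 0 else 0)"
    by (cases n) (simp_all add: qq_def fps_mult_nth_0 power_mult[symmetric])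
  then show ?case using Suc by (auto simp: qpoch_Suc fps_mult_nth_0)
qed

lemma ordge_ap: "ordge (2*k) (a * (qq^2)^k)"
  using ordge_mult_left[OF ordge_qq_power[of "2*k"], of a] by (simp add: power_mult)

lemma agree_one_minus: "ordge n b \<Longrightarrow> agree n (1 - b) 1"
  by (simp add: agree_def)

lemma qpoch_ordge_one:
  assumes "ordge n a"
  shows "agree n (qpoch a (qq^2) m) 1"
proof -
  have "agree n (qpoch a (qq^2) m) (\<Prod>k<m. 1)"
    unfolding qpoch_def
  proof (rule agree_prod)
    fix k
    have "ordge n (a * (qq^2)^k)" by (rule ordge_mult_right[OF assms])
    then show "agree n (1 - a * (qq^2)^k) 1" by (rule agree_one_minus)
  qed
  then show ?thesis by simp
qed

lemma qpoch_agree: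
  assumes "n \<le> m"
  shows "agree (2*n) (Pf a m) (Pf a n)"
proof -
  have "Pf a m = Pf a n * Pf (a * (qq^2)^n) (m - n)"
    using qpoch_add[of a "qq^2" n "m-n"] assms by simp
  moreover have "agree (2*n) (Pf (a * (qq^2)^n) (m - n)) 1"
    by (rule qpoch_ordge_one[OF ordge_ap])
  ultimately show ?thesis using agree_mult_left[of "2*n" _ 1 "Pf a n"] by simp
qed

lemma lim_fps_stab:
  fixes X :: "nat \<Rightarrow> ser"
  assumes "\<And>i m. M i \<le> m \<Longrightarrow> X m $ i = L $ i"
  shows "lim X = L"
proof -
  have "X \<longlonglongrightarrow> L"
  proof (rule tendsto_fpsI)
    fix i show "\<forall>\<^sub>F m in sequentially. X m $ i = L $ i"
      using eventually_ge_at_top[of "M i"] by eventually_elim (rule assms)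
  qed
  then show ?thesis by (rule limI)
qed

lemma Pi_agree: "agree (2*n) (Pi a) (Pf a n)"
proof -
  define L where "L = Abs_fps (\<lambda>i. Pf a (Suc i) $ i)"
  have st: "Pf a m $ i = L $ i" if "Suc i \<le> m" for i m
  proof -
    have "agree (2 * Suc i) (Pf a m) (Pf a (Suc i))" by (rule qpoch_agree[OF that])
    then show ?thesis by (simp add: agree_def L_def)
  qed
  have "Pi a = L" unfolding qpoch_inf_def by (rule lim_fps_stab[of Suc]) (rule st)
  show ?thesis unfolding agree_def
  proof (intro allI impI)
    fix i assume i: "i < 2*n"
    define m where "m = max n (Suc i)"
    have "Pf a m $ i = Pf a n $ i"
      using qpoch_agree[of n m a] i by (simp add: m_def agree_def)
    moreover have "Pf a m $ i = L $ i" by (rule st) (simp add: m_def)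
    ultimately show "Pi a $ i = Pf a n $ i" using \<open>Pi a = L\<close> by simp
  qed
qed

lemma Pi_split: "Pi a = Pf a k * Pi (a * (qq^2)^k)"
proof (rule agree_eqI)
  fix n
  have "agree (2*n) (Pi a) (Pf a (k+n))"
    by (rule agree_mono[OF Pi_agree]) simp
  moreover have "agree (2*n) (Pf a k * Pi (a * (qq^2)^k)) (Pf a k * Pf (a * (qq^2)^k) n)"
    by (rule agree_mult_left[OF Pi_agree])
  moreover have "Pf a (k+n) = Pf a k * Pf (a * (qq^2)^k) n" by (rule qpoch_add)
  ultimately have "agree (2*n) (Pi a) (Pf a k * Pi (a * (qq^2)^k))"
    by (simp add: agree_def)
  then show "agree n (Pi a) (Pf a k * Pi (a * (qq^2)^k))"
    by (rule agree_mono) simp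
qed

lemma Pi_Suc: "Pi a = (1 - a) * Pi (a * qq^2)"
  using Pi_split[of a 1] by (simp add: qpoch_def)

lemma Pi_nth0: "Pi a $ 0 = 1 - a $ 0"
proof -
  have "agree (2*1) (Pi a) (Pf a 1)" by (rule Pi_agree)
  then have "Pi a $ 0 = Pf a 1 $ 0" by (simp add: agree_def)
  then show ?thesis by (simp add: qpoch_nth0)
qed

lemma Pi_ordge_one:
  assumes "ordge n a"
  shows "agree n (Pi a) 1"
proof -
  have "agree n (Pi a) (Pf a n)" by (rule agree_mono[OF Pi_agree]) simp
  moreover have "agree n (Pf a n) 1" by (rule qpoch_ordge_one[OF assms])
  ultimately show ?thesis by (rule agree_trans)
qed

lemma uniq_rec:
  fixes d u v :: "nat \<Rightarrow> ser"
  assumes rec: "\<And>k. u k * d k = v k * d (Suc k)"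
    and u0: "\<And>k. u k $ 0 \<noteq> 0"
    and ord: "\<And>k. ordge k (d k)"
  shows "d 0 = 0"
proof (rule agree_eqI)
  fix n
  have step: "ordge n (d j)" if "ordge n (d (Suc j))" for j
  proof -
    have "d j = inverse (u j) * (u j * d j)"
      using u0[of j] by (simp add: mult.assoc[symmetric] inverse_mult_eq_1)
    also have "\<dots> = (inverse (u j) * v j) * d (Suc j)" by (simp add: rec mult.assoc)
    finally show ?thesis using ordge_mult_left[OF that] by simp
  qed
  have "ordge n (d (n - i))" if "i \<le> n" for i
    using that
  proof (induction i)
    case 0 then show ?case using ord[of n] by simp
  next
    case (Suc i)
    then have "ordge n (d (n - i))" by simp
    moreover have "n - i = Suc (n - Suc i)" using Suc.prems by simp
    ultimately show ?case using step by simp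
  qed
  from this[of n] show "agree n (d 0) 0" by simp
qed


lemma qq_nth0[simp]: "qq $ 0 = 0" "(qq^2) $ 0 = 0"
  by (simp_all add: qq_def)

lemma ordge_div: "g $ 0 \<noteq> 0 \<Longrightarrow> ordge n f \<Longrightarrow> ordge n (f / g)"
  by (simp add: fps_divide_unit ordge_mult_right)

lemma Pfp_nth0[simp]: "Pf (qq^2) m $ 0 = 1"
  using qpoch_nth0[of "qq^2" m] by (simp add: qq_def)

lemma ordge1_imp: "y $ 0 = 0 \<Longrightarrow> ordge 1 y" by (simp add: agree_def)

lemma ordge_power_ge: "ordge 1 y \<Longrightarrow> ordge m (y ^ m)"
  using ordge_power[of 1 y m] by simp

definition cc :: "ser \<Rightarrow> ser \<Rightarrow> nat \<Rightarrow> ser" where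
  "cc a y m = Pf a m * y ^ m / Pf (qq^2) m"

definition hh :: "ser \<Rightarrow> ser \<Rightarrow> ser" where
  "hh a y = isum (cc a y)"

definition RR :: "ser \<Rightarrow> ser \<Rightarrow> ser" where
  "RR a y = Pi (a * y) / Pi y"

lemma cc_0[simp]: "cc a y 0 = 1" by (simp add: cc_def)

lemma cc_ordge:
  assumes "ordge j y"
  shows "ordge (j*m) (cc a y m)"
  unfolding cc_def by (intro ordge_div ordge_mult_left ordge_power assms) simp

lemma cc_ordge1: "y $ 0 = 0 \<Longrightarrow> ordge m (cc a y m)"
  using cc_ordge[OF ordge1_imp, of y m a] by simp

lemma cc_shift: "cc a (y * qq^2) m = (qq^2)^m * cc a y m"
  by (simp add: cc_def fps_divide_unit power_mult_distrib mult_ac)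

lemma phi_Pfp_nz: "phi (Pf (qq^2) m) \<noteq> 0"
  by (rule phi_nz) simp

lemma cc_step: "cc a y (Suc n) * (1 - (qq^2)^(Suc n)) = y * (1 - a * (qq^2)^n) * cc a y n"
proof -
  have u: "(1 - (qq^2)^(Suc n)) $ 0 \<noteq> 0" by (simp add: qq_def)
  have nz1: "phi (Pf (qq^2) n) \<noteq> 0" by (rule phi_Pfp_nz)
  have nz2: "phi (1 - (qq^2)^(Suc n)) \<noteq> 0" by (rule phi_nz[OF u])
  have e: "Pf (qq^2) (Suc n) = Pf (qq^2) n * (1 - (qq^2)^(Suc n))"
    by (simp add: qpoch_Suc)
  have "phi (cc a y (Suc n) * (1 - (qq^2)^(Suc n))) = phi (y * (1 - a * (qq^2)^n) * cc a y n)"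
    unfolding cc_def phi_mult
    apply (subst (1 2) phi_div, simp, simp)
    apply (simp only: e qpoch_Suc phi_mult)
    using nz1 nz2 by (simp add: field_simps)
  then show ?thesis by (rule fps_to_fls_eq_imp_fps_eq)
qed

lemma qbin_fin:
  "(1 - y) * (\<Sum>m<Suc n. cc a y m) =
     (1 - a*y) * (\<Sum>m<Suc n. cc a (y * qq^2) m) - y * cc a y n + a * y * cc a (y * qq^2) n"
proof (induction n)
  case 0 then show ?case by (simp add: algebra_simps)
next
  case (Suc n)
  define S where "S = (\<Sum>m<Suc n. cc a y m)"
  define T where "T = (\<Sum>m<Suc n. cc a (y * qq^2) m)"
  define C1 where "C1 = cc a y (Suc n)"
  define C0 where "C0 = cc a y n"
  define D1 where "D1 = cc a (y * qq^2) (Suc n)"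
  define D0 where "D0 = cc a (y * qq^2) n"
  have IH: "(1 - y) * S = (1 - a*y) * T - y * C0 + a * y * D0"
    using Suc.IH by (simp add: S_def T_def C0_def D0_def)
  have st: "C1 * (1 - (qq^2)^(Suc n)) = y * (1 - a * (qq^2)^n) * C0"
    unfolding C1_def C0_def by (rule cc_step)
  have d1: "D1 = (qq^2)^(Suc n) * C1" unfolding D1_def C1_def by (rule cc_shift)
  have d0: "D0 = (qq^2)^n * C0" unfolding D0_def C0_def by (rule cc_shift)
  have H: "C1 = D1 + y * C0 - a * y * D0"
    using st unfolding d1 d0 by (simp add: algebra_simps)
  have "(1 - y) * (S + C1) = ((1 - a*y) * T - y * C0 + a * y * D0) + (1 - y) * C1"
    using IH by (simp add: distrib_left)
  also have "\<dots> = (1 - a*y) * (T + D1) - y * C1 + a * y * D1"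
    using H by algebra
  finally show ?case by (simp add: S_def T_def C1_def D1_def)
qed

lemma hh_rec:
  assumes y0: "y $ 0 = 0"
  shows "(1 - y) * hh a y = (1 - a*y) * hh a (y * qq^2)"
proof (rule agree_eqI)
  fix n
  have yp0: "(y * qq^2) $ 0 = 0" using y0 by (simp add: fps_mult_nth_0)
  have o1: "\<And>k. ordge k (cc a y k)" using cc_ordge1[OF y0] .
  have o2: "\<And>k. ordge k (cc a (y * qq^2) k)" using cc_ordge1[OF yp0] .
  have a1: "agree n ((1 - y) * hh a y) ((1 - y) * (\<Sum>m<Suc n. cc a y m))"
    unfolding hh_def by (intro agree_mult_left isum_agree o1) simp
  have a2: "agree n ((1 - a*y) * hh a (y * qq^2)) ((1 - a*y) * (\<Sum>m<Suc n. cc a (y * qq^2) m))"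
    unfolding hh_def by (intro agree_mult_left isum_agree o2) simp
  have b1: "ordge n (y * cc a y n)" by (intro ordge_mult_left o1)
  have b2: "ordge n (a * y * cc a (y * qq^2) n)" by (intro ordge_mult_left o2)
  have "agree n ((1 - a*y) * (\<Sum>m<Suc n. cc a (y * qq^2) m) - y * cc a y n + a * y * cc a (y * qq^2) n)
     ((1 - a*y) * (\<Sum>m<Suc n. cc a (y * qq^2) m) - 0 + 0)"
    by (intro agree_add agree_diff b1 b2 agree_refl)
  then show "agree n ((1 - y) * hh a y) ((1 - a*y) * hh a (y * qq^2))"
    using a1 a2 qbin_fin[where y=y and n=n and a=a] by (simp add: agree_def)
qed

lemma RR_rec:
  assumes y0: "y $ 0 = 0"
  shows "(1 - y) * RR a y = (1 - a*y) * RR a (y * qq^2)"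
proof -
  have yp0: "(y * qq^2) $ 0 = 0" using y0 by (simp add: fps_mult_nth_0)
  have ayp0: "(a * y * qq^2) $ 0 = 0" using y0 by (simp add: fps_mult_nth_0)
  have u1: "Pi y $ 0 \<noteq> 0" using y0 Pi_nth0[of y] by simp
  have u2: "Pi (y * qq^2) $ 0 \<noteq> 0" using yp0 Pi_nth0[of "y * qq^2"] by simp
  have e1: "Pi (a * y) = (1 - a * y) * Pi (a * (y * qq^2))"
    using Pi_Suc[of "a*y"] by (simp add: mult.assoc)
  have e2: "Pi y = (1 - y) * Pi (y * qq^2)" by (rule Pi_Suc)
  have nz: "phi (Pi (y * qq^2)) \<noteq> 0" by (rule phi_nz[OF u2])
  have nz2: "1 - phi y \<noteq> 0"
  proof
    assume "1 - phi y = 0"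
    then have "phi (1 - y) = 0" by simp
    then have "1 - y = 0" by simp
    then have "(1 - y) $ 0 = 0" by simp
    then show False using y0 by simp
  qed
  have aux: "\<And>W V B U :: rat fls fls. V \<noteq> 0 \<Longrightarrow> W \<noteq> 0 \<Longrightarrow> W * (B * U / (W * V)) = B * (U / V)"
    by (simp add: field_simps)
  have "phi ((1 - y) * RR a y) = phi ((1 - a*y) * RR a (y * qq^2))"
    unfolding RR_def phi_mult
    apply (subst phi_div[OF u1], subst phi_div[OF u2])
    apply (subst e1, subst e2)
    unfolding phi_mult
    using aux[OF nz] nz2 by simp
  then show ?thesis by (rule fps_to_fls_eq_imp_fps_eq)
qed

lemma hh_agree_one:
  assumes y0: "y $ 0 = 0" and oj: "ordge j y"
  shows "agree j (hh a y) 1"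
proof -
  have o1: "\<And>k. ordge k (cc a y k)" using cc_ordge1[OF y0] .
  have "hh a y = 1 + isum (\<lambda>k. cc a y (Suc k))"
    unfolding hh_def by (subst isum_shift[OF o1]) simp
  moreover have "ordge j (isum (\<lambda>k. cc a y (Suc k)))"
  proof (rule ordge_isum)
    fix k
    show "ordge k (cc a y (Suc k))" using o1[of "Suc k"] by (simp add: agree_def)
    have "ordge (j * Suc k) (cc a y (Suc k))" by (rule cc_ordge[OF oj])
    then show "ordge j (cc a y (Suc k))" by (rule agree_mono) simp
  qed
  ultimately show ?thesis by (simp add: agree_def)
qed

lemma RR_agree_one:
  assumes y0: "y $ 0 = 0" and oj: "ordge j y"
  shows "agree j (RR a y) 1"
proof -
  have u1: "Pi y $ 0 \<noteq> 0" using y0 Pi_nth0[of y] by simp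
  have "agree j (Pi (a*y)) 1" by (rule Pi_ordge_one[OF ordge_mult_left[OF oj]])
  moreover have "agree j (Pi y) 1" by (rule Pi_ordge_one[OF oj])
  ultimately have "agree j (Pi (a*y) / Pi y) (1 / 1)" by (intro agree_divide u1)
  then show ?thesis by (simp add: RR_def)
qed

theorem qbinomial:
  assumes x0: "x $ 0 = 0"
  shows "hh a x = RR a x"
proof -
  define y where "y k = x * (qq^2)^k" for k
  have y0: "y k $ 0 = 0" for k using x0 by (simp add: y_def fps_mult_nth_0)
  have ys: "y k * qq^2 = y (Suc k)" for k by (simp add: y_def mult_ac)
  define d where "d k = hh a (y k) - RR a (y k)" for k
  have rec: "(1 - y k) * d k = (1 - a * y k) * d (Suc k)" for k
    unfolding d_def right_diff_distrib hh_rec[OF y0] RR_rec[OF y0] ys ..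
  have u0: "(1 - y k) $ 0 \<noteq> 0" for k using y0[of k] by simp
  have ord: "ordge k (d k)" for k
  proof -
    have oy: "ordge k (y k)"
      using ordge_ap[of k x] unfolding y_def by (rule agree_mono) simp
    have "agree k (hh a (y k) - RR a (y k)) (1 - 1)"
      by (intro agree_diff hh_agree_one RR_agree_one y0 oy)
    then show ?thesis by (simp add: d_def)
  qed
  have "d 0 = 0" by (rule uniq_rec[of "\<lambda>k. 1 - y k" d "\<lambda>k. 1 - a * y k"]) (use rec u0 ord in auto)
  then show ?thesis by (simp add: d_def y_def)
qed


lemma zw: "zz * zinv = 1"
proof -
  have "fls_X * fls_X_inv = (1::rat fls)"
    using fls_inverse_X_inv[where 'a=rat] by (metis fls_X_inv_nonzero right_inverse mult.commute)
  then show ?thesis by (simp add: zz_def zinv_def)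
qed

lemma zz0: "zz $ 0 = fls_X" by (simp add: zz_def)
lemma zinv0: "zinv $ 0 = fls_X_inv" by (simp add: zinv_def)

lemma X_ne1: "fls_X \<noteq> (1::rat fls)"
proof
  assume "fls_X = (1::rat fls)"
  then have "fls_nth fls_X 1 = fls_nth (1::rat fls) 1" by simp
  then show False by simp
qed

lemma Xinv_ne1: "fls_X_inv \<noteq> (1::rat fls)"
proof
  assume "fls_X_inv = (1::rat fls)"
  then have "fls_nth fls_X_inv (-1) = fls_nth (1::rat fls) (-1)" by simp
  then show False by simp
qed

lemma one_minus_zz0: "(1 - zz) $ 0 \<noteq> 0" using X_ne1 by (simp add: zz_def)
lemma one_minus_zinv0: "(1 - zinv) $ 0 \<noteq> 0" using Xinv_ne1 by (simp add: zinv_def)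

lemma ppow0: "0 < k \<Longrightarrow> ((qq^2)^k) $ 0 = 0"
  by (cases k) (simp_all add: fps_mult_nth_0)

lemma times_ppow0: "0 < k \<Longrightarrow> (a * (qq^2)^k) $ 0 = 0"
  by (simp add: fps_mult_nth_0 ppow0)

lemma Pi_unit: "a $ 0 = 0 \<Longrightarrow> Pi a $ 0 = 1"
  using Pi_nth0[of a] by simp

lemma Pf_unit: "a $ 0 = 0 \<Longrightarrow> Pf a k $ 0 = 1"
  using qpoch_nth0[of a k] by simp

lemma Pf_nz0: "a $ 0 \<noteq> 1 \<Longrightarrow> Pf a k $ 0 \<noteq> 0"
  using qpoch_nth0[of a k] by simp

lemma Pi_nz0: "a $ 0 \<noteq> 1 \<Longrightarrow> Pi a $ 0 \<noteq> 0"
  using Pi_nth0[of a] by simp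

lemma zz0_ne1: "zz $ 0 \<noteq> 1" using X_ne1 by (simp add: zz_def)
lemma zinv0_ne1: "zinv $ 0 \<noteq> 1" using Xinv_ne1 by (simp add: zinv_def)

lemma mqq0[simp]: "(- qq) $ 0 = 0" by simp

definition tt :: "nat \<Rightarrow> ser" where
  "tt k = qq ^ (2*k) * Pi (qq ^ (2*k+2)) * Pi (- (qq ^ (2*k+1)))
      / (Pi (zz * qq ^ (2*k)) * Pi (zinv * qq ^ (2*k)))"

lemma tt_alt: "tt k = (qq^2)^k * Pi (qq^2 * (qq^2)^k) * Pi (- qq * (qq^2)^k)
      / (Pi (zz * (qq^2)^k) * Pi (zinv * (qq^2)^k))"
proof -
  have e1: "qq ^ (2*k) = (qq^2)^k" by (simp add: power_mult)
  have e2: "qq ^ (2*k+2) = qq^2 * (qq^2)^k"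
    unfolding power_mult[symmetric] power_add[symmetric] by (simp add: add.commute)
  have e3: "- (qq ^ (2*k+1)) = - qq * (qq^2)^k"
  proof -
    have "qq ^ (2*k+1) = qq * (qq^2)^k"
      unfolding power_mult[symmetric] by (simp add: add.commute)
    then show ?thesis by simp
  qed
  show ?thesis unfolding tt_def by (simp only: e1 e2 e3)
qed

lemma tt_den0: "0 < k \<Longrightarrow> (Pi (zz * (qq^2)^k) * Pi (zinv * (qq^2)^k)) $ 0 \<noteq> 0"
  by (simp add: fps_mult_nth_0 Pi_unit times_ppow0)

lemma tt_ordge: "0 < k \<Longrightarrow> ordge (2*k) (tt k)"
  unfolding tt_alt
  by (intro ordge_div tt_den0 ordge_mult_right) (simp_all add: power_mult[symmetric] ordge_qq_power)

lemma S2bar_isum: "S2bar = isum (\<lambda>n. tt (Suc n))"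
proof -
  have "S2bar = suminf (\<lambda>n. tt (Suc n))" by (simp add: S2bar_def tt_def Let_def)
  also have "\<dots> = isum (\<lambda>n. tt (Suc n))"
  proof (rule suminf_isum)
    fix n
    have "ordge (2 * Suc n) (tt (Suc n))" by (rule tt_ordge) simp
    then show "ordge n (tt (Suc n))" by (rule agree_mono) simp
  qed
  finally show ?thesis .
qed


definition uu :: "nat \<Rightarrow> ser" where
  "uu k = (qq^2)^k * Pf zz k * Pf zinv k / (Pf (qq^2) k * Pf (-qq) k)"

lemma absQ2:
  fixes Z W A B Cz Cw Pz Pw Pp Pq Ip Iq Ep Eq Q :: "rat fls fls"
  assumes "(1-Z)*A = Pz*Cz" "(1-W)*B = Pw*Cw" "Ep = Pp*Ip" "Eq = Pq*Iq"
    "A\<noteq>0" "B\<noteq>0" "Cz\<noteq>0" "Cw\<noteq>0" "Pp\<noteq>0" "Pq\<noteq>0"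
  shows "(1-Z)*(1-W)*(Q*Ip*Iq/(Cz*Cw)) = Eq*Ep/(A*B)*(Q*Pz*Pw/(Pp*Pq))"
proof -
  have pz: "Pz = (1-Z)*A/Cz" using assms(1,7) by (simp add: field_simps)
  have pw: "Pw = (1-W)*B/Cw" using assms(2,8) by (simp add: field_simps)
  show ?thesis unfolding pz pw assms(3,4) using assms(5-10) by (simp add: field_simps)
qed

lemma tt_uu:
  assumes k: "0 < k"
  shows "(1 - zz) * (1 - zinv) * tt k = M2gf * uu k"
proof -
  define P where "P = (qq^2)^k"
  have r1: "(1 - zz) * Pi (zz * qq^2) = Pf zz k * Pi (zz * P)"
    using Pi_split[of zz k] Pi_Suc[of zz] by (simp add: P_def)
  have r2: "(1 - zinv) * Pi (zinv * qq^2) = Pf zinv k * Pi (zinv * P)"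
    using Pi_split[of zinv k] Pi_Suc[of zinv] by (simp add: P_def)
  have r3: "Pi (qq^2) = Pf (qq^2) k * Pi (qq^2 * P)"
    using Pi_split[of "qq^2" k] by (simp add: P_def)
  have r4: "Pi (-qq) = Pf (-qq) k * Pi (-qq * P)"
    using Pi_split[of "-qq" k] by (simp add: P_def)
  have P0: "P $ 0 = 0" using k by (simp add: P_def ppow0)
  have uA: "Pi (zz * qq^2) $ 0 \<noteq> 0" "Pi (zinv * qq^2) $ 0 \<noteq> 0"
    by (simp_all add: Pi_unit fps_mult_nth_0)
  have uC: "Pi (zz * P) $ 0 \<noteq> 0" "Pi (zinv * P) $ 0 \<noteq> 0"
    using P0 by (simp_all add: Pi_unit fps_mult_nth_0)
  have uP: "Pf (qq^2) k $ 0 \<noteq> 0" "Pf (-qq) k $ 0 \<noteq> 0"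
    by (simp_all add: Pf_unit)
  have u1: "(Pi (zz * P) * Pi (zinv * P)) $ 0 \<noteq> 0" using uC by (simp add: fps_mult_nth_0)
  have u2: "(Pi (zz * qq^2) * Pi (zinv * qq^2)) $ 0 \<noteq> 0" using uA by (simp add: fps_mult_nth_0)
  have u3: "(Pf (qq^2) k * Pf (-qq) k) $ 0 \<noteq> 0" using uP by (simp add: fps_mult_nth_0)
  have tt: "tt k = P * Pi (qq^2 * P) * Pi (-qq * P) / (Pi (zz * P) * Pi (zinv * P))"
    unfolding tt_alt P_def by simp
  have M: "M2gf = Pi (-qq) * Pi (qq^2) / (Pi (zz * qq^2) * Pi (zinv * qq^2))"
    by (simp add: M2gf_def qq_def)
  have U: "uu k = P * Pf zz k * Pf zinv k / (Pf (qq^2) k * Pf (-qq) k)"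
    by (simp add: uu_def P_def)
  have "phi ((1 - zz) * (1 - zinv) * tt k) = phi (M2gf * uu k)"
    unfolding tt M U
    apply (simp only: phi_mult phi_div[OF u1] phi_div[OF u2] phi_div[OF u3] fps_to_fls_minus phi_one)
    apply (rule absQ2)
    using arg_cong[OF r1, of phi] arg_cong[OF r2, of phi] arg_cong[OF r3, of phi] arg_cong[OF r4, of phi]
      phi_nz[OF uA(1)] phi_nz[OF uA(2)] phi_nz[OF uC(1)] phi_nz[OF uC(2)] phi_nz[OF uP(1)] phi_nz[OF uP(2)]
    by (simp_all only: phi_mult fps_to_fls_minus phi_one not_False_eq_True)
  then show ?thesis by (rule fps_to_fls_eq_imp_fps_eq)
qed


lemma cc_scale: "cc a (y * r) m = r^m * cc a y m"
  by (simp add: cc_def fps_divide_unit power_mult_distrib mult_ac)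

lemma ordge_pp: "ordge (2*k) ((qq^2)^k)"
  using ordge_ap[of k 1] by simp

lemma ordge_uu: "ordge (2*k) (uu k)"
  unfolding uu_def
  by (intro ordge_div ordge_mult_right ordge_pp) (simp add: fps_mult_nth_0 Pf_unit)

abbreviation a0 :: ser where "a0 \<equiv> - qq * zinv"

definition C0 :: ser where "C0 = Pi zz / Pi (-qq)"
definition KK :: ser where "KK = Pi (qq^2) / Pi (zinv * qq^2)"

lemma absQ3a:
  fixes Ez Eq Pz Cz Pq Iq Pp Pw P :: "rat fls fls"
  assumes "Ez = Pz*Cz" "Eq = Pq*Iq" "Cz\<noteq>0" "Iq\<noteq>0" "Pp\<noteq>0" "Pq\<noteq>0"
  shows "P*Pz*Pw/(Pp*Pq) = Ez/Eq * (P*Pw/Pp*(Iq/Cz))"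
  unfolding assms(1,2) using assms(3-6) by (simp add: field_simps)

lemma uu_C0:
  assumes k: "0 < k"
  shows "uu k = C0 * ((qq^2)^k * Pf zinv k / Pf (qq^2) k * hh a0 (zz * (qq^2)^k))"
proof -
  define P where "P = (qq^2)^k"
  have P0: "P $ 0 = 0" using k by (simp add: P_def ppow0)
  have zP0: "(zz * P) $ 0 = 0" using P0 by (simp add: fps_mult_nth_0)
  have hh: "hh a0 (zz * P) = Pi (-qq * P) / Pi (zz * P)"
  proof -
    have "a0 * (zz * P) = - qq * P * (zz * zinv)" by (simp add: mult_ac)
    then have e: "a0 * (zz * P) = - qq * P" by (simp add: zw)
    have "hh a0 (zz * P) = Pi (a0 * (zz * P)) / Pi (zz * P)"
      using qbinomial[OF zP0, of a0] by (simp only: RR_def)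
    then show ?thesis unfolding e .
  qed
  have r1: "Pi zz = Pf zz k * Pi (zz * P)" using Pi_split[of zz k] by (simp add: P_def)
  have r2: "Pi (-qq) = Pf (-qq) k * Pi (-qq * P)" using Pi_split[of "-qq" k] by (simp add: P_def)
  have u1: "Pi (zz * P) $ 0 \<noteq> 0" "Pi (-qq * P) $ 0 \<noteq> 0"
    using P0 by (simp_all add: Pi_unit fps_mult_nth_0)
  have u2: "Pf (qq^2) k $ 0 \<noteq> 0" "Pf (-qq) k $ 0 \<noteq> 0" by (simp_all add: Pf_unit)
  have u3: "Pi (-qq) $ 0 \<noteq> 0" by (simp add: Pi_unit)
  have u4: "(Pf (qq^2) k * Pf (-qq) k) $ 0 \<noteq> 0" using u2 by (simp add: fps_mult_nth_0)
  have "phi (uu k) = phi (C0 * (P * Pf zinv k / Pf (qq^2) k * hh a0 (zz * P)))"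
    unfolding uu_def C0_def hh P_def[symmetric]
    apply (simp only: phi_mult phi_div[OF u4] phi_div[OF u3] phi_div[OF u2(1)] phi_div[OF u1(1)])
    apply (rule absQ3a)
    using arg_cong[OF r1, of phi] arg_cong[OF r2, of phi]
      phi_nz[OF u1(1)] phi_nz[OF u1(2)] phi_nz[OF u2(1)] phi_nz[OF u2(2)]
    by (simp_all only: phi_mult not_False_eq_True)
  then show ?thesis unfolding P_def by (rule fps_to_fls_eq_imp_fps_eq)
qed

definition TT :: "nat \<Rightarrow> nat \<Rightarrow> ser" where
  "TT n m = (qq^2)^(Suc n) * Pf zinv (Suc n) / Pf (qq^2) (Suc n) * (((qq^2)^(Suc n))^m * cc a0 zz m)"

lemma TT_ordge: "ordge (n+m) (TT n m)"
proof -
  define P where "P = (qq^2)^(Suc n)"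
  have oP: "ordge (2 * Suc n) P" unfolding P_def by (rule ordge_pp)
  have "ordge (2 * Suc n * Suc m) (P ^ Suc m)" by (rule ordge_power[OF oP])
  then have o: "ordge (n+m) (P ^ Suc m)" by (rule agree_mono) (simp add: algebra_simps)
  have "TT n m = P ^ Suc m * (Pf zinv (Suc n) * inverse (Pf (qq^2) (Suc n)) * cc a0 zz m)"
    by (simp add: TT_def P_def fps_divide_unit mult_ac)
  then show ?thesis using ordge_mult_right[OF o] by simp
qed

lemma uu_Suc_isum: "uu (Suc n) = C0 * isum (\<lambda>m. TT n m)"
proof -
  define P where "P = (qq^2)^(Suc n)"
  have oP: "ordge 1 P" using ordge_pp[of "Suc n"] unfolding P_def by (rule agree_mono) simp
  have o: "ordge m (P^m * cc a0 zz m)" for m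
    using ordge_mult_right[OF ordge_power[OF oP]] by simp
  have "hh a0 (zz * P) = isum (\<lambda>m. P^m * cc a0 zz m)"
    unfolding hh_def by (rule isum_cong) (rule cc_scale)
  then have "P * Pf zinv (Suc n) / Pf (qq^2) (Suc n) * hh a0 (zz * P) = isum (\<lambda>m. TT n m)"
    using isum_mult_left[OF o, of "P * Pf zinv (Suc n) / Pf (qq^2) (Suc n)"]
    by (simp add: TT_def P_def)
  then show ?thesis using uu_C0[of "Suc n"] by (simp add: P_def)
qed

lemma TT_row: "isum (\<lambda>n. TT n m) = cc a0 zz m * (RR zinv ((qq^2)^(Suc m)) - 1)"
proof -
  define Y where "Y = (qq^2)^(Suc m)"
  have Y0: "Y $ 0 = 0" by (simp add: Y_def ppow0)
  have o: "\<And>k. ordge k (cc zinv Y k)" by (rule cc_ordge1[OF Y0])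
  have o2: "ordge n (cc zinv Y (Suc n))" for n using o[of "Suc n"] by (simp add: agree_def)
  have eq: "TT n m = cc a0 zz m * cc zinv Y (Suc n)" for n
  proof -
    have "Y ^ Suc n = (qq^2)^(Suc n) * ((qq^2)^(Suc n))^m"
      unfolding Y_def power_mult[symmetric] power_add[symmetric] by (simp add: algebra_simps)
    then show ?thesis by (simp add: TT_def cc_def fps_divide_unit mult_ac)
  qed
  have "isum (\<lambda>n. TT n m) = cc a0 zz m * isum (\<lambda>n. cc zinv Y (Suc n))"
    unfolding eq by (rule isum_mult_left[OF o2, symmetric])
  also have "isum (\<lambda>n. cc zinv Y (Suc n)) = hh zinv Y - 1"
    unfolding hh_def by (subst isum_shift[OF o]) simp
  also have "hh zinv Y = RR zinv Y" by (rule qbinomial[OF Y0])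
  finally show ?thesis by (simp add: Y_def)
qed

definition VV :: "nat \<Rightarrow> ser" where
  "VV m = KK * (cc a0 zz m * (RR zinv ((qq^2)^(Suc m)) - 1))"

lemma RR_minus_ordge: "ordge (2 * Suc m) (RR zinv ((qq^2)^(Suc m)) - 1)"
proof -
  have "agree (2 * Suc m) (RR zinv ((qq^2)^(Suc m))) 1"
    by (rule RR_agree_one[OF _ ordge_pp]) (simp add: ppow0)
  then show ?thesis by (simp add: agree_def)
qed

lemma VV_ordge: "ordge m (VV m)"
  unfolding VV_def by (intro ordge_mult_left agree_mono[OF RR_minus_ordge]) simp

lemma absQ3b:
  fixes Ez Eq Ep A B Z :: "rat fls fls"
  assumes "Ez = (1-Z)*A" "A\<noteq>0" "B\<noteq>0" "Eq\<noteq>0"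
  shows "Eq*Ep/(A*B) * (Ez/Eq) = (1-Z) * (Ep/B)"
  unfolding assms(1) using assms(2-4) by (simp add: field_simps)

lemma M2gf_C0: "M2gf * C0 = (1 - zz) * KK"
proof -
  have M: "M2gf = Pi (-qq) * Pi (qq^2) / (Pi (zz * qq^2) * Pi (zinv * qq^2))"
    by (simp add: M2gf_def qq_def)
  have uA: "Pi (zz * qq^2) $ 0 \<noteq> 0" "Pi (zinv * qq^2) $ 0 \<noteq> 0" "Pi (-qq) $ 0 \<noteq> 0"
    by (simp_all add: Pi_unit fps_mult_nth_0)
  have u2: "(Pi (zz * qq^2) * Pi (zinv * qq^2)) $ 0 \<noteq> 0" using uA by (simp add: fps_mult_nth_0)
  have "phi (M2gf * C0) = phi ((1 - zz) * KK)"
    unfolding M C0_def KK_def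
    apply (simp only: phi_mult phi_div[OF u2] phi_div[OF uA(3)] phi_div[OF uA(2)] fps_to_fls_minus phi_one)
    apply (rule absQ3b)
    using arg_cong[OF Pi_Suc[of zz], of phi] phi_nz[OF uA(1)] phi_nz[OF uA(2)] phi_nz[OF uA(3)]
    by (simp_all only: phi_mult fps_to_fls_minus phi_one not_False_eq_True)
  then show ?thesis by (rule fps_to_fls_eq_imp_fps_eq)
qed

theorem S2bar_VV: "(1 - zz) * (1 - zinv) * S2bar = (1 - zz) * isum VV"
proof -
  have ot: "ordge n ((1 - zz) * (1 - zinv) * tt (Suc n))" for n
    using ordge_mult_left[OF tt_ordge[of "Suc n"]] by (simp add: agree_def)
  have ou: "ordge n (uu (Suc n))" for n
    using ordge_uu[of "Suc n"] by (simp add: agree_def)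
  have oT: "ordge n (isum (\<lambda>m. TT n m))" for n
    by (rule ordge_isum) (use TT_ordge in \<open>simp_all add: agree_def\<close>)
  have oR: "ordge m (cc a0 zz m * (RR zinv ((qq^2)^(Suc m)) - 1))" for m
    using ordge_mult_left[OF RR_minus_ordge[of m]] by (simp add: agree_def)
  have "(1 - zz) * (1 - zinv) * S2bar = isum (\<lambda>n. (1 - zz) * (1 - zinv) * tt (Suc n))"
    unfolding S2bar_isum
    by (subst isum_mult_left) (use tt_ordge in \<open>simp_all add: agree_def\<close>)
  also have "\<dots> = isum (\<lambda>n. M2gf * uu (Suc n))"
    by (rule isum_cong) (simp add: tt_uu)
  also have "\<dots> = M2gf * isum (\<lambda>n. uu (Suc n))"
    by (rule isum_mult_left[OF ou, symmetric])
  also have "isum (\<lambda>n. uu (Suc n)) = isum (\<lambda>n. C0 * isum (\<lambda>m. TT n m))"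
    by (rule isum_cong) (rule uu_Suc_isum)
  also have "\<dots> = C0 * isum (\<lambda>n. isum (\<lambda>m. TT n m))"
    by (rule isum_mult_left[OF oT, symmetric])
  also have "isum (\<lambda>n. isum (\<lambda>m. TT n m)) = isum (\<lambda>m. isum (\<lambda>n. TT n m))"
    by (rule isum_swap[OF TT_ordge])
  also have "\<dots> = isum (\<lambda>m. cc a0 zz m * (RR zinv ((qq^2)^(Suc m)) - 1))"
    by (rule isum_cong) (rule TT_row)
  also have "M2gf * (C0 * \<dots>) = (1 - zz) * (KK * \<dots>)"
    using M2gf_C0 by (simp add: mult.assoc[symmetric])
  also have "KK * isum (\<lambda>m. cc a0 zz m * (RR zinv ((qq^2)^(Suc m)) - 1)) = isum VV"
    unfolding VV_def by (rule isum_mult_left[OF oR])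
  finally show ?thesis .
qed


definition GG :: "nat \<Rightarrow> ser" where
  "GG m = Pf a0 m / Pf (zinv * qq^2) m"

definition AN :: "nat \<Rightarrow> ser" where
  "AN N = zz^N * GG N + (1 - zz) * (\<Sum>m<N. zz^m * GG m)"

lemma absVV:
  fixes K Ep Ew P A Pp Pw Ip Iw Zm :: "rat fls fls"
  assumes "Ep = Pp * Ip" "Ew = Pw * Iw" "Pp \<noteq> 0" "Pw \<noteq> 0" "Ip \<noteq> 0" "Iw \<noteq> 0"
  shows "Ep / Ew * (A * Zm / Pp * (Iw / Ip - 1)) = Zm * (A / Pw) - Ep / Ew * (A * Zm / Pp)"
  unfolding assms(1,2) using assms(3-6) by (simp add: field_simps)

lemma VV_eq: "VV m = zz^m * GG m - KK * cc a0 zz m"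
proof -
  have r1: "Pi (qq^2) = Pf (qq^2) m * Pi ((qq^2)^(Suc m))"
    using Pi_split[of "qq^2" m] by (simp add: mult_ac)
  have r2: "Pi (zinv * qq^2) = Pf (zinv * qq^2) m * Pi (zinv * (qq^2)^(Suc m))"
    using Pi_split[of "zinv * qq^2" m] by (simp add: mult_ac)
  have u: "Pf (qq^2) m $ 0 \<noteq> 0" "Pf (zinv * qq^2) m $ 0 \<noteq> 0"
     "Pi ((qq^2)^(Suc m)) $ 0 \<noteq> 0" "Pi (zinv * (qq^2)^(Suc m)) $ 0 \<noteq> 0"
     "Pi (zinv * qq^2) $ 0 \<noteq> 0"
    by (simp_all add: Pf_unit Pi_unit fps_mult_nth_0 ppow0 del: power_Suc)
  have "phi (VV m) = phi (zz^m * GG m - KK * cc a0 zz m)"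
    unfolding VV_def KK_def GG_def cc_def RR_def
    apply (simp only: phi_mult phi_div[OF u(1)] phi_div[OF u(2)] phi_div[OF u(3)] phi_div[OF u(5)]
        fps_to_fls_minus phi_one)
    apply (rule absVV)
    using arg_cong[OF r1, of phi] arg_cong[OF r2, of phi] phi_nz[OF u(1)] phi_nz[OF u(2)]
      phi_nz[OF u(3)] phi_nz[OF u(4)]
    by (simp_all only: phi_mult not_False_eq_True)
  then show ?thesis by (rule fps_to_fls_eq_imp_fps_eq)
qed


lemma absS5:
  fixes Ep Ew Eq Eq' A B Q :: "rat fls fls"
  assumes "Eq = (1 + Q) * Eq'" "Ew \<noteq> 0" "A \<noteq> 0"
  shows "Ep / Ew * ((1 + Q) * (Eq' / A)) = Eq * Ep / (A * Ew)"
  unfolding assms(1) using assms(2-3) by (simp add: field_simps)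

lemma KK_M2gf: "KK * ((1 + qq) * (Pi (- qq * qq^2) / Pi (zz * qq^2))) = M2gf"
proof -
  have M: "M2gf = Pi (-qq) * Pi (qq^2) / (Pi (zz * qq^2) * Pi (zinv * qq^2))"
    by (simp add: M2gf_def qq_def)
  have r: "Pi (-qq) = (1 + qq) * Pi (- qq * qq^2)" using Pi_Suc[of "-qq"] by simp
  have u: "Pi (zz * qq^2) $ 0 \<noteq> 0" "Pi (zinv * qq^2) $ 0 \<noteq> 0"
    by (simp_all add: Pi_unit fps_mult_nth_0)
  have u2: "(Pi (zz * qq^2) * Pi (zinv * qq^2)) $ 0 \<noteq> 0" using u by (simp add: fps_mult_nth_0)
  have "phi (KK * ((1 + qq) * (Pi (- qq * qq^2) / Pi (zz * qq^2)))) = phi M2gf"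
    unfolding M KK_def
    apply (simp only: phi_mult phi_div[OF u(1)] phi_div[OF u(2)] phi_div[OF u2] fps_to_fls_plus phi_one)
    apply (rule absS5)
    using arg_cong[OF r, of phi] phi_nz[OF u(1)] phi_nz[OF u(2)]
    by (simp_all only: phi_mult fps_to_fls_plus phi_one not_False_eq_True)
  then show ?thesis by (rule fps_to_fls_eq_imp_fps_eq)
qed

lemma absS6:
  fixes Ep Ew Pp Ip Pw Iw A Z :: "rat fls fls"
  assumes "Ep = Pp * Ip" "Pp \<noteq> 0" "Ew \<noteq> 0"
  shows "Ep / Ew * Z * (A * Z ^ n / Pp) = Z * Z^n * A * (Ip / Ew)"
  unfolding assms(1) using assms(2-3) by (simp add: field_simps)

lemma S6: "agree n (KK * zz * cc a0 zz n) (zz^(Suc n) * GG (Suc n))"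
proof -
  define P where "P = qq^2 * (qq^2)^n"
  have r: "Pi (qq^2) = Pf (qq^2) n * Pi P" using Pi_split[of "qq^2" n] by (simp add: P_def)
  have u: "Pf (qq^2) n $ 0 \<noteq> 0" "Pi (zinv * qq^2) $ 0 \<noteq> 0"
    by (simp_all add: Pf_unit Pi_unit fps_mult_nth_0)
  have uW: "Pf (zinv * qq^2) (Suc n) $ 0 \<noteq> 0" by (simp add: Pf_unit fps_mult_nth_0)
  have e: "KK * zz * cc a0 zz n = zz^(Suc n) * Pf a0 n * (Pi P / Pi (zinv * qq^2))"
  proof -
    have "phi (KK * zz * cc a0 zz n) = phi (zz^(Suc n) * Pf a0 n * (Pi P / Pi (zinv * qq^2)))"
      unfolding KK_def cc_def
      apply (simp only: phi_mult phi_div[OF u(1)] phi_div[OF u(2)] phi_power power_Suc)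
      apply (rule absS6)
      using arg_cong[OF r, of phi] phi_nz[OF u(1)] phi_nz[OF u(2)]
      by (simp_all only: phi_mult not_False_eq_True)
    then show ?thesis by (rule fps_to_fls_eq_imp_fps_eq)
  qed
  have oP: "ordge (2*n) P"
    using ordge_mult_left[OF ordge_pp[of n], of "qq^2"] by (simp add: P_def)
  have a1: "agree (2*n) (Pi P) 1" by (rule Pi_ordge_one[OF oP])
  have a2: "agree (2 * Suc n) (Pi (zinv * qq^2)) (Pf (zinv * qq^2) (Suc n))" by (rule Pi_agree)
  have a3: "agree (2*n) (Pi P / Pi (zinv * qq^2)) (1 / Pf (zinv * qq^2) (Suc n))"
    by (intro agree_divide u(2) a1 agree_mono[OF a2]) simp
  have a4: "agree (2*n) (Pf a0 n) (Pf a0 (Suc n))"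
  proof -
    have "ordge (2*n) (a0 * (qq^2)^n)" by (rule ordge_ap)
    then have "agree (2*n) (1 - a0 * (qq^2)^n) 1" by (rule agree_one_minus)
    then have "agree (2*n) (Pf a0 n * (1 - a0 * (qq^2)^n)) (Pf a0 n * 1)" by (rule agree_mult_left)
    then show ?thesis by (simp add: qpoch_Suc agree_sym)
  qed
  have F1: "agree (2*n) (zz^(Suc n) * Pf a0 n * (Pi P / Pi (zinv * qq^2)))
          (zz^(Suc n) * Pf a0 (Suc n) * (1 / Pf (zinv * qq^2) (Suc n)))"
    by (intro agree_mult agree_refl a4 a3)
  have F2: "zz^(Suc n) * Pf a0 (Suc n) * (1 / Pf (zinv * qq^2) (Suc n)) = zz^(Suc n) * GG (Suc n)"
    using uW by (simp add: GG_def fps_divide_unit)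
  have "agree (2*n) (KK * zz * cc a0 zz n) (zz^(Suc n) * GG (Suc n))"
    using F1 unfolding e F2 .
  then show ?thesis by (rule agree_mono) simp
qed

lemma analytic: "agree n (M2gf + (1 - zz) * isum VV) (AN (Suc n))"
proof -
  define Sc where "Sc = (\<Sum>m<Suc n. cc a0 zz m)"
  define Sp where "Sp = (\<Sum>m<Suc n. cc a0 (zz * qq^2) m)"
  define R where "R = Pi (- qq * qq^2) / Pi (zz * qq^2)"
  define SG where "SG = (\<Sum>m<Suc n. zz^m * GG m)"
  have zp0: "(zz * qq^2) $ 0 = 0" by (simp add: fps_mult_nth_0)
  have az: "a0 * zz = - qq" using zw by (simp add: mult_ac)
  have zw': "zinv * zz = 1" using zw by (simp add: mult.commute)
  have az2: "qq * zinv * zz = qq" by (simp add: mult.assoc zw')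
  have s1: "agree n ((1 - zz) * isum VV) ((1 - zz) * (\<Sum>m<Suc n. VV m))"
    by (intro agree_mult_left isum_agree VV_ordge) simp
  have s2: "(\<Sum>m<Suc n. VV m) = SG - KK * Sc"
    unfolding SG_def Sc_def VV_eq sum_subtractf sum_distrib_left ..
  have s3: "(1 - zz) * Sc = (1 + qq) * Sp - zz * cc a0 zz n - qq * cc a0 (zz * qq^2) n"
    using qbin_fin[where y=zz and n=n and a=a0] unfolding Sc_def Sp_def
    by (simp add: az2)
  have s4: "agree n Sp R"
  proof -
    have "agree n (hh a0 (zz * qq^2)) Sp"
      unfolding hh_def Sp_def by (intro isum_agree cc_ordge1 zp0) simp
    moreover have "hh a0 (zz * qq^2) = R"
    proof -
      have e: "a0 * (zz * qq^2) = - qq * qq^2" using az by (simp add: mult.assoc[symmetric])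
      show ?thesis using qbinomial[OF zp0, of a0] unfolding RR_def R_def e .
    qed
    ultimately show ?thesis by (simp add: agree_sym)
  qed
  have s5: "KK * ((1 + qq) * R) = M2gf" unfolding R_def by (rule KK_M2gf)
  have s6: "agree n (KK * zz * cc a0 zz n) (zz^(Suc n) * GG (Suc n))" by (rule S6)
  have o7: "ordge n (KK * qq * cc a0 (zz * qq^2) n)"
    by (intro ordge_mult_left cc_ordge1 zp0)
  have E1: "M2gf + (1 - zz) * (\<Sum>m<Suc n. VV m) =
      M2gf + (1 - zz) * SG - KK * ((1 + qq) * Sp) + KK * zz * cc a0 zz n + KK * qq * cc a0 (zz * qq^2) n"
    using s2 s3 by algebra
  have E2: "agree n (M2gf + (1 - zz) * isum VV) (M2gf + (1 - zz) * (\<Sum>m<Suc n. VV m))"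
    by (intro agree_add agree_refl s1)
  have E3: "agree n (M2gf + (1 - zz) * SG - KK * ((1 + qq) * Sp) + KK * zz * cc a0 zz n + KK * qq * cc a0 (zz * qq^2) n)
     (M2gf + (1 - zz) * SG - KK * ((1 + qq) * R) + zz^(Suc n) * GG (Suc n) + 0)"
    by (intro agree_add agree_diff agree_refl agree_mult_left s4 s6 o7)
  have E4: "M2gf + (1 - zz) * SG - KK * ((1 + qq) * R) + zz^(Suc n) * GG (Suc n) + 0 = AN (Suc n)"
    unfolding AN_def SG_def s5 by simp
  show ?thesis using E2 E3 unfolding E1 E4 by (rule agree_trans)
qed


definition SL :: "nat \<Rightarrow> nat \<Rightarrow> nat multiset set" where
  "SL L n = {p. is_partition p n \<and> no_rep_odd p \<and> (\<forall>x\<in>#p. x \<le> L)}"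

definition wt :: "nat multiset \<Rightarrow> rat fls" where "wt p = fls_X_inv ^ size p"

definition WL :: "nat \<Rightarrow> nat \<Rightarrow> rat fls" where "WL L n = (\<Sum>p\<in>SL L n. wt p)"

definition EL :: "nat \<Rightarrow> ser" where "EL L = Abs_fps (WL L)"

lemma size_le_sum: "(\<forall>x\<in>#p. 0 < x) \<Longrightarrow> size p \<le> sum_mset p"
  by (induction p) auto

lemma mem_le_sum: "x \<in># p \<Longrightarrow> x \<le> sum_mset (p :: nat multiset)"
  by (metis le_add1 multi_member_split sum_mset.add_mset)

lemma finite_partitions: "finite {p. is_partition p n}"
proof (rule finite_subset)
  show "{p. is_partition p n} \<subseteq> (\<Union>s\<in>{..n}. multisets_of_size {1..n} s)"
  proof
    fix p assume "p \<in> {p. is_partition p n}"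
    then have p: "\<forall>x\<in>#p. 0 < x" "sum_mset p = n" by (auto simp: is_partition_def)
    have "size p \<le> n" using size_le_sum[OF p(1)] p(2) by simp
    moreover have "set_mset p \<subseteq> {1..n}"
      using p mem_le_sum by fastforce
    ultimately show "p \<in> (\<Union>s\<in>{..n}. multisets_of_size {1..n} s)"
      by (auto simp: multisets_of_size_def)
  qed
  show "finite (\<Union>s\<in>{..n}. multisets_of_size {1..n} s)" by auto
qed

lemma finite_SL: "finite (SL L n)"
  by (rule finite_subset[OF _ finite_partitions]) (auto simp: SL_def)

lemma le_pred_iff:
  assumes "0 < (L::nat)"
  shows "(\<forall>x\<in>#p. x \<le> L - 1) \<longleftrightarrow> ((\<forall>x\<in>#p. x \<le> L) \<and> \<not> L \<in># p)"
proof
  assume a: "\<forall>x\<in>#p. x \<le> L - 1"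
  have "\<forall>x\<in>#p. x \<le> L"
  proof
    fix x assume "x \<in># p" then have "x \<le> L - 1" using a by blast
    then show "x \<le> L" using diff_le_self le_trans by blast
  qed
  moreover have "\<not> L \<in># p"
  proof
    assume "L \<in># p" then have "L \<le> L - 1" using a by blast
    then show False using assms by simp
  qed
  ultimately show "(\<forall>x\<in>#p. x \<le> L) \<and> \<not> L \<in># p" by blast
next
  assume a: "(\<forall>x\<in>#p. x \<le> L) \<and> \<not> L \<in># p"
  show "\<forall>x\<in>#p. x \<le> L - 1"
  proof
    fix x assume x: "x \<in># p"
    then have "x \<le> L" "x \<noteq> L" using a by auto
    then show "x \<le> L - 1" by simp
  qed
qed

lemma SL_prev:
  assumes "0 < L" shows "SL (L - 1) n = {p \<in> SL L n. \<not> L \<in># p}"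
  unfolding SL_def le_pred_iff[OF assms] by auto

lemma SL_with:
  assumes L: "0 < L" "L \<le> n"
  shows "{p \<in> SL L n. L \<in># p} = add_mset L ` (if even L then SL L (n - L) else SL (L - 1) (n - L))"
proof
  show "{p \<in> SL L n. L \<in># p} \<subseteq> add_mset L ` (if even L then SL L (n - L) else SL (L - 1) (n - L))"
  proof
    fix p assume "p \<in> {p \<in> SL L n. L \<in># p}"
    then have p: "is_partition p n" "no_rep_odd p" "\<forall>x\<in>#p. x \<le> L" "L \<in># p"
      by (auto simp: SL_def)
    define p' where "p' = p - {#L#}"
    have pp: "p = add_mset L p'" using p(4) by (simp add: p'_def)
    have ip: "is_partition p' (n - L)"
      using p(1) unfolding is_partition_def pp by auto
    have nr: "no_rep_odd p'"
      using p(2) unfolding no_rep_odd_def pp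
      by (metis count_add_mset le_SucI le_Suc_eq not_less_eq_eq)
    have le: "\<forall>x\<in>#p'. x \<le> L" using p(3) unfolding pp by auto
    have le2: "\<forall>x\<in>#p'. x \<le> L - 1" if "odd L"
    proof
      fix x assume x: "x \<in># p'"
      have "count p L \<le> 1" using p(2) that by (simp add: no_rep_odd_def)
      then have "count p' L = 0" unfolding pp by simp
      then have "x \<noteq> L" using x by (metis count_eq_zero_iff)
      then show "x \<le> L - 1" using le x by fastforce
    qed
    have "p' \<in> (if even L then SL L (n - L) else SL (L - 1) (n - L))"
      using ip nr le le2 by (auto simp: SL_def)
    then show "p \<in> add_mset L ` (if even L then SL L (n - L) else SL (L - 1) (n - L))"
      unfolding pp by blast
  qed
next
  show "add_mset L ` (if even L then SL L (n - L) else SL (L - 1) (n - L)) \<subseteq> {p \<in> SL L n. L \<in># p}"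
  proof
    fix p assume "p \<in> add_mset L ` (if even L then SL L (n - L) else SL (L - 1) (n - L))"
    then obtain p' where pp: "p = add_mset L p'"
      and p': "p' \<in> (if even L then SL L (n - L) else SL (L - 1) (n - L))" by blast
    have ip: "is_partition p' (n - L)" "no_rep_odd p'" "\<forall>x\<in>#p'. x \<le> L"
      using p' by (auto simp: SL_def split: if_splits)
    have od: "\<not> L \<in># p'" if "odd L"
    proof
      assume "L \<in># p'"
      moreover have "\<forall>x\<in>#p'. x \<le> L - 1" using p' that by (simp add: SL_def)
      ultimately have "L \<le> L - 1" by blast
      then show False using L(1) by simp
    qed
    have "is_partition p n" using ip(1) L unfolding pp is_partition_def by auto
    moreover have "no_rep_odd p"
      unfolding no_rep_odd_def pp
    proof (intro allI impI)
      fix x :: nat assume "odd x"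
      show "count (add_mset L p') x \<le> 1"
      proof (cases "x = L")
        case True
        then have "count p' L = 0" using od \<open>odd x\<close> by (simp add: count_eq_zero_iff)
        then show ?thesis using True by simp
      next
        case False
        then show ?thesis using ip(2) \<open>odd x\<close> by (simp add: no_rep_odd_def)
      qed
    qed
    moreover have "\<forall>x\<in>#p. x \<le> L" using ip(3) unfolding pp by auto
    ultimately show "p \<in> {p \<in> SL L n. L \<in># p}" unfolding pp by (auto simp: SL_def)
  qed
qed

lemma SL_with_empty: "L > n \<Longrightarrow> {p \<in> SL L n. L \<in># p} = {}"
  using mem_le_sum by (fastforce simp: SL_def is_partition_def)

lemma WL_rec:
  assumes L: "0 < L"
  shows "WL L n = WL (L - 1) n +
    (if L \<le> n then fls_X_inv * (if even L then WL L (n - L) else WL (L - 1) (n - L)) else 0)"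
proof -
  have split: "SL L n = SL (L - 1) n \<union> {p \<in> SL L n. L \<in># p}" using SL_prev[OF L] by auto
  have disj: "SL (L - 1) n \<inter> {p \<in> SL L n. L \<in># p} = {}" using SL_prev[OF L] by auto
  have "WL L n = WL (L - 1) n + (\<Sum>p\<in>{p \<in> SL L n. L \<in># p}. wt p)"
    unfolding WL_def by (subst split, subst sum.union_disjoint) (use finite_SL disj in auto)
  moreover have "(\<Sum>p\<in>{p \<in> SL L n. L \<in># p}. wt p) =
    (if L \<le> n then fls_X_inv * (if even L then WL L (n - L) else WL (L - 1) (n - L)) else 0)"
  proof (cases "L \<le> n")
    case True
    define T where "T = (if even L then SL L (n - L) else SL (L - 1) (n - L))"
    have "(\<Sum>p\<in>{p \<in> SL L n. L \<in># p}. wt p) = (\<Sum>p\<in>add_mset L ` T. wt p)"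
      unfolding T_def SL_with[OF L True] ..
    also have "\<dots> = (\<Sum>p\<in>T. wt (add_mset L p))"
      by (rule sum.reindex[unfolded comp_def]) (simp add: inj_on_def)
    also have "\<dots> = fls_X_inv * (\<Sum>p\<in>T. wt p)"
      by (simp add: wt_def sum_distrib_left)
    finally show ?thesis using True by (simp add: T_def WL_def)
  next
    case False
    then have e: "{p \<in> SL L n. L \<in># p} = {}" by (intro SL_with_empty) simp
    show ?thesis unfolding e using False by simp
  qed
  ultimately show ?thesis by simp
qed


lemma SL_0: "SL 0 n = (if n = 0 then {{#}} else {})"
proof -
  have "p \<in> SL 0 n \<longleftrightarrow> p = {#} \<and> n = 0" for p
  proof
    assume "p \<in> SL 0 n"
    then have "\<forall>x\<in>#p. 0 < x" "\<forall>x\<in>#p. x \<le> 0" "sum_mset p = n"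
      by (auto simp: SL_def is_partition_def)
    then have "p = {#}" by (metis less_le_not_le multiset_nonemptyE)
    then show "p = {#} \<and> n = 0" using \<open>sum_mset p = n\<close> by simp
  next
    assume "p = {#} \<and> n = 0"
    then show "p \<in> SL 0 n" by (simp add: SL_def is_partition_def no_rep_odd_def)
  qed
  then show ?thesis by auto
qed

lemma EL_0: "EL 0 = 1"
  by (rule fps_ext) (simp add: EL_def WL_def SL_0 wt_def)

lemma shift_nth: "(zinv * qq^L * F) $ n = (if L \<le> n then fls_X_inv * F $ (n - L) else 0)"
proof -
  have e: "zinv * qq^L * F = fps_const fls_X_inv * (fps_X^L * F)"
    by (simp add: zinv_def qq_def mult.assoc)
  show ?thesis unfolding e fps_mult_left_const_nth fps_X_power_mult_nth by simp
qed

lemma EL_rec: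
  assumes L: "0 < L"
  shows "EL L = EL (L - 1) + zinv * qq^L * (if even L then EL L else EL (L - 1))"
proof (rule fps_ext)
  fix n
  have "(zinv * qq^L * (if even L then EL L else EL (L - 1))) $ n =
      (if L \<le> n then fls_X_inv * (if even L then WL L (n - L) else WL (L - 1) (n - L)) else 0)"
    unfolding shift_nth by (simp add: EL_def)
  then show "EL L $ n = (EL (L - 1) + zinv * qq^L * (if even L then EL L else EL (L - 1))) $ n"
    using WL_rec[OF L, of n] by (simp add: EL_def)
qed

lemma EL_step: "EL (2*j+2) * (1 - zinv * qq^(2*j+2)) = EL (2*j) * (1 + zinv * qq^(2*j+1))"
proof -
  have e1: "EL (2*j+2) = EL (2*j+1) + zinv * qq^(2*j+2) * EL (2*j+2)"
    using EL_rec[of "2*j+2"] by simp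
  have e2: "EL (2*j+1) = EL (2*j) + zinv * qq^(2*j+1) * EL (2*j)"
    using EL_rec[of "2*j+1"] by simp
  have "EL (2*j+2) * (1 - zinv * qq^(2*j+2)) = EL (2*j+1)"
    using e1 by (simp add: algebra_simps)
  also have "\<dots> = EL (2*j) * (1 + zinv * qq^(2*j+1))"
    using e2 by (simp add: algebra_simps)
  finally show ?thesis .
qed

lemma EL_Pf: "EL (2*j) * Pf (zinv * qq^2) j = Pf a0 j"
proof (induction j)
  case 0 then show ?case by (simp add: EL_0)
next
  case (Suc j)
  have pp: "(qq^2)^j = qq^(2*j)" by (rule power_mult[symmetric])
  have p1: "zinv * qq^2 * (qq^2)^j = zinv * qq^(2*j+2)"
    unfolding pp power_add by (simp only: mult_ac)
  have p2: "1 - a0 * (qq^2)^j = 1 + zinv * qq^(2*j+1)"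
  proof -
    have h1: "qq * (qq^2)^j = qq^(2*j+1)"
      unfolding pp by simp
    have h2: "a0 * (qq^2)^j = - (zinv * (qq * (qq^2)^j))" by (simp add: mult_ac)
    show ?thesis unfolding h2 h1 by simp
  qed
  have "EL (2 * Suc j) * Pf (zinv * qq^2) (Suc j)
      = (EL (2*j+2) * (1 - zinv * qq^(2*j+2))) * Pf (zinv * qq^2) j"
  proof -
    have q: "Pf (zinv*qq^2) (Suc j) = Pf (zinv*qq^2) j * (1 - zinv*qq^(2*j+2))"
      by (simp only: qpoch_Suc p1)
    have t: "2 * Suc j = 2*j+2" by simp
    show ?thesis unfolding q t by (simp only: mult_ac)
  qed
  also have "\<dots> = (EL (2*j) * Pf (zinv * qq^2) j) * (1 + zinv * qq^(2*j+1))"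
    unfolding EL_step by (simp add: mult_ac)
  also have "\<dots> = Pf a0 (Suc j)"
    unfolding Suc.IH by (simp only: qpoch_Suc p2)
  finally show ?case .
qed

lemma EL_GG: "EL (2*j) = GG j"
proof -
  have u: "Pf (zinv * qq^2) j $ 0 \<noteq> 0" by (simp add: Pf_unit fps_mult_nth_0)
  have "GG j = EL (2*j) * Pf (zinv * qq^2) j * inverse (Pf (zinv * qq^2) j)"
    unfolding EL_Pf GG_def using u by (simp add: fps_divide_unit)
  also have "\<dots> = EL (2*j)"
    using inverse_mult_eq_1'[OF u] by (simp only: mult.assoc mult_1_right)
  finally show ?thesis by simp
qed


definition NP :: "nat \<Rightarrow> nat multiset set" where
  "NP n = {p. is_partition p n \<and> no_rep_odd p}"

definition cpart :: "nat multiset \<Rightarrow> nat" where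
  "cpart p = (largest_part p + 1) div 2"

definition Agf :: ser where
  "Agf = Abs_fps (\<lambda>n. \<Sum>p\<in>NP n. fls_X ^ cpart p * wt p)"

definition DD :: "nat \<Rightarrow> ser" where
  "DD j = EL (2*j) - (if j = 0 then 0 else EL (2*j - 2))"

lemma finite_NP: "finite (NP n)"
  by (rule finite_subset[OF _ finite_partitions]) (auto simp: NP_def)

lemma largest_le: "(\<forall>x\<in>#p. x \<le> L) \<longleftrightarrow> largest_part p \<le> L"
proof (cases "p = {#}")
  case True then show ?thesis by (simp add: largest_part_def)
next
  case False
  then have "set_mset p \<noteq> {}" by simp
  then show ?thesis using False by (simp add: largest_part_def Max_le_iff)
qed

lemma SL_NP: "SL L n = {p \<in> NP n. largest_part p \<le> L}"
  unfolding SL_def NP_def largest_le by blast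

lemma largest_le_n: "p \<in> NP n \<Longrightarrow> largest_part p \<le> n"
  unfolding largest_le[symmetric] NP_def is_partition_def using mem_le_sum by auto

lemma cpart_arith: "(l + 1) div 2 = (j::nat) \<longleftrightarrow> l \<le> 2*j \<and> (j = 0 \<or> \<not> l \<le> 2*j - 2)"
  by presburger

lemma fiber: "{p \<in> NP n. cpart p = j} = SL (2*j) n - (if j = 0 then {} else SL (2*j - 2) n)"
  unfolding SL_NP cpart_def cpart_arith by auto

lemma fiber_sum: "(\<Sum>p\<in>{p \<in> NP n. cpart p = j}. wt p) =
    WL (2*j) n - (if j = 0 then 0 else WL (2*j - 2) n)"
proof (cases "j = 0")
  case True then show ?thesis unfolding fiber by (simp add: WL_def)
next
  case False
  have sub: "SL (2*j - 2) n \<subseteq> SL (2*j) n" unfolding SL_NP by auto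
  show ?thesis unfolding fiber using False
    by (simp add: WL_def sum_diff[OF finite_SL sub])
qed

lemma DD_nth: "(zz^j * DD j) $ n = fls_X^j * (WL (2*j) n - (if j = 0 then 0 else WL (2*j - 2) n))"
  by (cases "j = 0") (simp_all add: DD_def zz_def fps_const_power EL_def)

lemma Agf_nth:
  assumes "n \<le> 2*N"
  shows "Agf $ n = (\<Sum>j\<le>N. zz^j * DD j) $ n"
proof -
  have img: "cpart ` NP n \<subseteq> {..N}"
    using largest_le_n assms unfolding cpart_def by fastforce
  have "Agf $ n = (\<Sum>p\<in>NP n. fls_X ^ cpart p * wt p)" by (simp add: Agf_def)
  also have "\<dots> = (\<Sum>j\<le>N. \<Sum>p\<in>{p \<in> NP n. cpart p = j}. fls_X ^ cpart p * wt p)"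
    by (rule sum.group[symmetric, OF finite_NP _ img]) simp
  also have "\<dots> = (\<Sum>j\<le>N. fls_X ^ j * (\<Sum>p\<in>{p \<in> NP n. cpart p = j}. wt p))"
    by (rule sum.cong) (auto simp: sum_distrib_left)
  also have "\<dots> = (\<Sum>j\<le>N. fls_X ^ j * (WL (2*j) n - (if j = 0 then 0 else WL (2*j - 2) n)))"
    unfolding fiber_sum ..
  also have "\<dots> = (\<Sum>j\<le>N. zz^j * DD j) $ n"
    unfolding fps_sum_nth DD_nth ..
  finally show ?thesis .
qed

lemma sum_DD: "(\<Sum>j\<le>N. zz^j * DD j) = AN N"
proof (induction N)
  case 0 then show ?case by (simp add: DD_def AN_def EL_GG[of 0, simplified])
next
  case (Suc N)
  have d: "DD (Suc N) = GG (Suc N) - GG N"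
    unfolding DD_def using EL_GG[of "Suc N"] EL_GG[of N] by simp
  show ?case unfolding sum.atMost_Suc Suc.IH d AN_def
    by (simp add: algebra_simps)
qed

lemma Agf_agree: "agree n Agf (AN (Suc n))"
  unfolding agree_def using Agf_nth[of _ "Suc n"] sum_DD by simp

theorem Agf_eq: "Agf = M2gf + (1 - zz) * isum VV"
proof (rule agree_eqI)
  fix n
  show "agree n Agf (M2gf + (1 - zz) * isum VV)"
    using Agf_agree[of n] analytic[of n] by (simp add: agree_def)
qed

lemma ceil_half: "\<lceil>real l / 2\<rceil> = int ((l + 1) div 2)"
proof (cases "even l")
  case True
  then obtain k where k: "l = 2*k" by blast
  then show ?thesis by simp
next
  case False
  then obtain k where k: "l = 2*k+1" using oddE by blast
  have h1: "real l / 2 = real k + 1/2" using k by simp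
  have h2: "\<lceil>real k + 1/2\<rceil> = int k + 1" by (rule ceiling_unique) auto
  have h3: "(l + 1) div 2 = k + 1" using k by simp
  show ?thesis unfolding h1 h2 h3 by simp
qed

lemma wt_nth: "fls_nth (fls_X ^ c * wt p) m = (if m = int c - int (size p) then 1 else 0)"
proof -
  have "fls_X ^ c * wt p = fls_shift (- int c + int (size p)) (1 :: rat fls)"
    unfolding wt_def fls_X_power_conv_shift_1 fls_X_inv_power_conv_shift_1
      fls_times_both_shifted_simp by simp
  then show ?thesis by auto
qed

lemma Agf_N2: "fls_nth (Agf $ n) m = of_nat (N2 m n)"
proof -
  have r: "M2rank p = int (cpart p) - int (size p)" for p
    unfolding M2rank_def cpart_def ceil_half ..
  have "fls_nth (Agf $ n) m = (\<Sum>p\<in>NP n. if m = M2rank p then 1 else 0)"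
    by (simp add: Agf_def fls_nth_sum wt_nth r)
  also have "\<dots> = of_nat (card {p \<in> NP n. M2rank p = m})"
    using finite_NP by (simp add: sum.If_cases Int_def eq_commute[of m])
  also have "{p \<in> NP n. M2rank p = m} = {p. is_partition p n \<and> no_rep_odd p \<and> M2rank p = m}"
    by (auto simp: NP_def)
  finally show ?thesis by (simp add: N2_def)
qed

theorem theorem2p2:
  "\<forall>n m. fls_nth (fps_nth ((1 - zz) * (1 - zinv) * S2bar) n) m = of_nat (N2 m n) - M2 m n"
proof (intro allI)
  fix n m
  have "(1 - zz) * (1 - zinv) * S2bar = Agf - M2gf"
    unfolding S2bar_VV Agf_eq by simp
  then show "fls_nth (fps_nth ((1 - zz) * (1 - zinv) * S2bar) n) m = of_nat (N2 m n) - M2 m n"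
    by (simp add: Agf_N2 M2_def)
qed


end
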